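(* Let $1\le k<N/2$. There is a quantum algorithm that, for every unknown $x\in\{0,1\}^N$ with $wt(x)=k$, finds $x$ with bounded error using $O(k^{1/4})$ queries to the quasi B-oracle for $x$.
   Context: For $x,q\in\{0,1\}^N$ let $x\wedge q$ be the bitwise AND and $wt$ the Hamming weight. The quasi B-oracle is a stochastic oracle with random answer $\zeta(x;q)\in\{0,1\}$ where $\Pr[\zeta(x;q)=0]=0$ if $wt(x\wedge q)$ is odd, $\Pr[\zeta(x;q)=0]=\sqrt{1/wt(x\wedge q)}$ if $wt(x\wedge q)$ is positive and even, and $\Pr[\zeta(x;q)=0]=1$ if $wt(x\wedge q)=0$. It is accessed through the unitary $\tilde O_x|q,a,z\rangle=\sqrt{\Pr[\zeta(x;q)=0]}\,|q,a,z\rangle+(-1)^a\sqrt{\Pr[\zeta(x;q)=1]}\,|q,a\oplus1,z\rangle$, where $a$ is a one-bit answer register and $z$ a workspace register. (It models a balance where the weighed coin set $\{i:q_i=1\}$ is split between the two pans uniformly at random.) Bounded error: output equals $x$ with probability at least a constant such as $2/3$. *)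

theory Defs
  imports Complex_Main
begin

text \<open>An input x \<in> {0,1}^N is represented by the set of indices i < N with x_i = 1;
  likewise a query string q. Then wt(x \<and> q) = card (x \<inter> q).
  Basis states are triples (q, a, z): query register q \<subseteq> {..<N}, one-bit answer
  register a, workspace register z < W.\<close>

type_synonym basis = "nat set \<times> bool \<times> nat"
type_synonym qstate = "basis \<Rightarrow> complex"
type_synonym qmatrix = "basis \<Rightarrow> basis \<Rightarrow> complex"  (* M b' b = <b'|M|b> *)

definition Basis :: "nat \<Rightarrow> nat \<Rightarrow> basis set" where
  "Basis N W = {(q, a, z). q \<subseteq> {..<N} \<and> z < W}"

definition apply_mat :: "nat \<Rightarrow> nat \<Rightarrow> qmatrix \<Rightarrow> qstate \<Rightarrow> qstate" where
  "apply_mat N W M \<psi> = (\<lambda>b'. \<Sum>b\<in>Basis N W. M b' b * \<psi> b)"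

definition is_unitary :: "nat \<Rightarrow> nat \<Rightarrow> qmatrix \<Rightarrow> bool" where
  "is_unitary N W M \<longleftrightarrow>
     (\<forall>b1\<in>Basis N W. \<forall>b2\<in>Basis N W.
        (\<Sum>b\<in>Basis N W. cnj (M b b1) * M b b2) = (if b1 = b2 then 1 else 0))"

definition prob0 :: "nat set \<Rightarrow> nat set \<Rightarrow> real" where
  "prob0 x q = (let w = card (x \<inter> q) in
      if w = 0 then 1 else if odd w then 0 else sqrt (1 / real w))"

definition quasiB :: "nat set \<Rightarrow> qmatrix" where
  "quasiB x = (\<lambda>(q', a', z') (q, a, z).
     if q' = q \<and> z' = z then
       (if a' = a then complex_of_real (sqrt (prob0 x q))
        else (if a then -1 else 1) * complex_of_real (sqrt (1 - prob0 x q)))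
     else 0)"

text \<open>Running U_0, O, U_1, O, ..., O, U_T on a state (T = length Us - 1 oracle calls).\<close>
fun run :: "nat \<Rightarrow> nat \<Rightarrow> nat set \<Rightarrow> qmatrix list \<Rightarrow> qstate \<Rightarrow> qstate" where
  "run N W x [] \<psi> = \<psi>"
| "run N W x [U] \<psi> = apply_mat N W U \<psi>"
| "run N W x (U # V # Us) \<psi> =
     run N W x (V # Us) (apply_mat N W (quasiB x) (apply_mat N W U \<psi>))"

definition init_state :: qstate where
  "init_state = (\<lambda>b. if b = ({}, False, 0) then 1 else 0)"

definition success_prob ::
  "nat \<Rightarrow> nat \<Rightarrow> qmatrix list \<Rightarrow> (basis \<Rightarrow> nat set) \<Rightarrow> nat set \<Rightarrow> real" where
  "success_prob N W Us out x =
     (\<Sum>b\<in>Basis N W. if out b = x then (cmod (run N W x Us init_state b))\<^sup>2 else 0)"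

end

theory Submission imports Defs begin

definition agree :: "nat \<Rightarrow> nat \<Rightarrow> qstate \<Rightarrow> qstate \<Rightarrow> bool" where
  "agree N W \<psi> \<phi> \<longleftrightarrow> (\<forall>b\<in>Basis N W. \<psi> b = \<phi> b)"

lemma apply_mat_cong: "agree N W \<psi> \<phi> \<Longrightarrow> apply_mat N W M \<psi> = apply_mat N W M \<phi>"
  unfolding agree_def apply_mat_def by (auto intro!: sum.cong ext)

lemma Basis_eq: "Basis N W = Pow {..<N} \<times> (UNIV \<times> {..<W})"
  unfolding Basis_def by auto

lemma finite_Basis[simp]: "finite (Basis N W)"
  unfolding Basis_eq by (auto intro!: finite_cartesian_product)

lemma sum_Basis: "(\<Sum>b\<in>Basis N W. f b) = (\<Sum>q\<in>Pow {..<N}. \<Sum>a\<in>UNIV. \<Sum>z<W. f (q,a,z))"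
  unfolding Basis_eq by (simp add: sum.cartesian_product)

definition mmul :: "nat \<Rightarrow> nat \<Rightarrow> qmatrix \<Rightarrow> qmatrix \<Rightarrow> qmatrix" where
  "mmul N W A B = (\<lambda>b' b. \<Sum>c\<in>Basis N W. A b' c * B c b)"

lemma apply_mmul: "apply_mat N W (mmul N W A B) \<psi> = apply_mat N W A (apply_mat N W B \<psi>)"
  unfolding apply_mat_def mmul_def
  by (auto simp: sum_distrib_right sum_distrib_left mult.assoc intro!: ext sum.swap)

lemma unitary_mmul:
  assumes A: "is_unitary N W A" and B: "is_unitary N W B"
  shows "is_unitary N W (mmul N W A B)"
  unfolding is_unitary_def
proof (intro ballI)
  fix b1 b2 assume b1: "b1 \<in> Basis N W" and b2: "b2 \<in> Basis N W"
  have "(\<Sum>b\<in>Basis N W. cnj (mmul N W A B b b1) * mmul N W A B b b2)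
     = (\<Sum>b\<in>Basis N W. \<Sum>c\<in>Basis N W. \<Sum>d\<in>Basis N W. (cnj (A b c) * A b d) * (cnj (B c b1) * B d b2))"
    unfolding mmul_def by (simp add: sum_distrib_left sum_distrib_right mult_ac)
  also have "\<dots> = (\<Sum>c\<in>Basis N W. \<Sum>d\<in>Basis N W. (\<Sum>b\<in>Basis N W. cnj (A b c) * A b d) * (cnj (B c b1) * B d b2))"
    by (simp add: sum_distrib_right, subst sum.swap, rule sum.cong, simp, subst sum.swap, simp)
  also have "\<dots> = (\<Sum>c\<in>Basis N W. \<Sum>d\<in>Basis N W. (if c = d then cnj (B c b1) * B d b2 else 0))"
    using A unfolding is_unitary_def by (intro sum.cong refl) auto
  also have "\<dots> = (\<Sum>c\<in>Basis N W. cnj (B c b1) * B c b2)"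
    by (simp add: sum.delta)
  also have "\<dots> = (if b1 = b2 then 1 else 0)" using B b1 b2 unfolding is_unitary_def by auto
  finally show "(\<Sum>b\<in>Basis N W. cnj (mmul N W A B b b1) * mmul N W A B b b2) = (if b1 = b2 then 1 else 0)" .
qed


lemma if0_mult: "(if P then x else 0) * y = (if P then x * y else (0::complex))" by simp
lemma mult_if0: "y * (if P then x else 0) = (if P then y * x else (0::complex))" by simp
lemma sum_if_const: "(\<Sum>x\<in>A. if P then f x else 0) = (if P then (\<Sum>x\<in>A. f x) else (0::complex))" by simp
lemma mem_Basis: "((q,a,z) \<in> Basis N W) = (q \<subseteq> {..<N} \<and> z < W)" unfolding Basis_def by auto
lemma if0_mult_real: "(if P then x else 0) * y = (if P then x * y else (0::real))" by simp
lemma cnj_if0: "cnj (if P then x else 0) = (if P then cnj x else 0)" by simp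

definition Ctl :: "(nat \<Rightarrow> bool \<Rightarrow> bool \<Rightarrow> complex) \<Rightarrow> qmatrix" where
  "Ctl G = (\<lambda>(q',a',z') (q,a,z). if q' = q \<and> z' = z then G z a' a else 0)"

definition unitary2 :: "(bool \<Rightarrow> bool \<Rightarrow> complex) \<Rightarrow> bool" where
  "unitary2 G \<longleftrightarrow> (\<forall>a1 a2. (\<Sum>a\<in>UNIV. cnj (G a a1) * G a a2) = (if a1 = a2 then 1 else 0))"

lemma apply_Ctl:
  assumes "(q,a,z) \<in> Basis N W"
  shows "apply_mat N W (Ctl G) \<psi> (q,a,z) = G z a True * \<psi> (q,True,z) + G z a False * \<psi> (q,False,z)"
  using assms unfolding apply_mat_def sum_Basis Ctl_def mem_Basis
  by (simp add: if0_mult if_if_eq_conj[symmetric] sum_if_const sum.delta sum.delta' UNIV_bool cong: if_cong)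

lemma unitary_Ctl:
  assumes "\<And>z. z < W \<Longrightarrow> unitary2 (G z)"
  shows "is_unitary N W (Ctl G)"
  unfolding is_unitary_def
proof (intro ballI)
  fix b1 b2 assume b1: "b1 \<in> Basis N W" and b2: "b2 \<in> Basis N W"
  obtain q1 a1 z1 where e1: "b1 = (q1,a1,z1)" by (cases b1) auto
  obtain q2 a2 z2 where e2: "b2 = (q2,a2,z2)" by (cases b2) auto
  have q1: "q1 \<subseteq> {..<N}" and z1: "z1 < W" using b1 e1 unfolding Basis_def by auto
  have "(\<Sum>b\<in>Basis N W. cnj (Ctl G b b1) * Ctl G b b2)
     = (\<Sum>a\<in>UNIV. cnj (G z1 a a1) * (if q2 = q1 \<and> z2 = z1 then G z1 a a2 else 0))"
    using q1 z1 unfolding sum_Basis Ctl_def e1 e2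
    by (simp add: if0_mult mult_if0 cnj_if0 if_if_eq_conj[symmetric] sum_if_const sum.delta sum.delta' cong: if_cong)
  also have "\<dots> = (if b1 = b2 then 1 else 0)"
    proof (cases "q2 = q1 \<and> z2 = z1")
    case True then show ?thesis using assms[of z1] z1 unfolding unitary2_def e1 e2 by simp
  next
    case False
    then have "b1 \<noteq> b2" unfolding e1 e2 by auto
    moreover have "\<not> (q2 = q1 \<and> z2 = z1)" using False by blast
    ultimately show ?thesis by (simp only: if_False if_P mult_zero_right sum.neutral_const)
  qed
  finally show "(\<Sum>b\<in>Basis N W. cnj (Ctl G b b1) * Ctl G b b2) = (if b1 = b2 then 1 else 0)" .
qed

definition Rz :: "(nat \<Rightarrow> nat \<Rightarrow> complex) \<Rightarrow> qmatrix" where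
  "Rz R = (\<lambda>(q',a',z') (q,a,z). if q' = q \<and> a' = a then R z' z else 0)"

lemma apply_Rz:
  assumes "(q,a,z) \<in> Basis N W"
  shows "apply_mat N W (Rz R) \<psi> (q,a,z) = (\<Sum>z'<W. R z z' * \<psi> (q,a,z'))"
  using assms unfolding apply_mat_def sum_Basis Rz_def mem_Basis
  by (simp add: if0_mult if_if_eq_conj[symmetric] sum_if_const sum.delta sum.delta' UNIV_bool cong: if_cong)

lemma unitary_Rz:
  assumes "\<And>z1 z2. z1 < W \<Longrightarrow> z2 < W \<Longrightarrow> (\<Sum>z<W. cnj (R z z1) * R z z2) = (if z1 = z2 then 1 else 0)"
  shows "is_unitary N W (Rz R)"
  unfolding is_unitary_def
proof (intro ballI)
  fix b1 b2 assume b1: "b1 \<in> Basis N W" and b2: "b2 \<in> Basis N W"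
  obtain q1 a1 z1 where e1: "b1 = (q1,a1,z1)" by (cases b1) auto
  obtain q2 a2 z2 where e2: "b2 = (q2,a2,z2)" by (cases b2) auto
  have q1: "q1 \<subseteq> {..<N}" and z1: "z1 < W" using b1 e1 unfolding Basis_def by auto
  have z2: "z2 < W" using b2 e2 unfolding Basis_def by auto
  have "(\<Sum>b\<in>Basis N W. cnj (Rz R b b1) * Rz R b b2)
     = (\<Sum>z<W. cnj (R z z1) * (if q2 = q1 \<and> a2 = a1 then R z z2 else 0))"
    using q1 unfolding sum_Basis Rz_def e1 e2
    by (simp add: if0_mult mult_if0 cnj_if0 if_if_eq_conj[symmetric] sum_if_const sum.delta sum.delta' UNIV_bool cong: if_cong)
  also have "\<dots> = (if b1 = b2 then 1 else 0)"
    proof (cases "q2 = q1 \<and> a2 = a1")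
    case True then show ?thesis using assms[OF z1 z2] unfolding e1 e2 by simp
  next
    case False
    then have "b1 \<noteq> b2" unfolding e1 e2 by auto
    moreover have "\<not> (q2 = q1 \<and> a2 = a1)" using False by blast
    ultimately show ?thesis by (simp only: if_False if_P mult_zero_right sum.neutral_const)
  qed
  finally show "(\<Sum>b\<in>Basis N W. cnj (Rz R b b1) * Rz R b b2) = (if b1 = b2 then 1 else 0)" .
qed


lemma char_zero:
  assumes fin: "finite A" and i: "i \<in> d" and d: "d \<subseteq> A"
  shows "(\<Sum>q\<in>Pow A. (-1::real) ^ card (q \<inter> d)) = 0"
proof -
  define A' where "A' = A - {i}"
  have A: "A = insert i A'" using i d unfolding A'_def by auto
  have iA': "i \<notin> A'" unfolding A'_def by auto
  have finA': "finite A'" using fin unfolding A'_def by auto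
  have disj: "Pow A' \<inter> insert i ` Pow A' = {}" using iA' by auto
  have inj: "inj_on (insert i) (Pow A')" using iA' by (intro inj_onI) (auto simp: insert_ident)
  have "(\<Sum>q\<in>Pow A. (-1::real) ^ card (q \<inter> d))
      = (\<Sum>q\<in>Pow A'. (-1::real) ^ card (q \<inter> d)) + (\<Sum>q\<in>insert i ` Pow A'. (-1::real) ^ card (q \<inter> d))"
    unfolding A Pow_insert using finA' disj by (intro sum.union_disjoint) auto
  also have "(\<Sum>q\<in>insert i ` Pow A'. (-1::real) ^ card (q \<inter> d)) = (\<Sum>q\<in>Pow A'. (-1::real) ^ card (insert i q \<inter> d))"
    using inj by (simp add: sum.reindex)
  also have "\<dots> = (\<Sum>q\<in>Pow A'. - ((-1::real) ^ card (q \<inter> d)))"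
  proof (rule sum.cong[OF refl])
    fix q assume "q \<in> Pow A'"
    then have "i \<notin> q" "finite q" using iA' finA' finite_subset by auto
    then have "card (insert i q \<inter> d) = Suc (card (q \<inter> d))"
      using i by (simp add: Int_insert_left)
    then show "(-1::real) ^ card (insert i q \<inter> d) = - ((-1) ^ card (q \<inter> d))" by simp
  qed
  finally show ?thesis by (simp add: sum_negf)
qed

lemma card_parity:
  assumes "finite q"
  shows "card (q \<inter> s) + card (q \<inter> t) = card (q \<inter> ((s - t) \<union> (t - s))) + 2 * card (q \<inter> s \<inter> t)"
proof -
  have f: "finite (q \<inter> X)" for X using assms by auto
  have 1: "card (q \<inter> s) = card (q \<inter> (s - t)) + card (q \<inter> s \<inter> t)"
  proof -
    have "q \<inter> s = (q \<inter> (s - t)) \<union> (q \<inter> s \<inter> t)" by blast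
    moreover have "(q \<inter> (s - t)) \<inter> (q \<inter> s \<inter> t) = {}" by blast
    ultimately show ?thesis using assms by (metis card_Un_disjoint finite_Int)
  qed
  have 2: "card (q \<inter> t) = card (q \<inter> (t - s)) + card (q \<inter> s \<inter> t)"
  proof -
    have "q \<inter> t = (q \<inter> (t - s)) \<union> (q \<inter> s \<inter> t)" by blast
    moreover have "(q \<inter> (t - s)) \<inter> (q \<inter> s \<inter> t) = {}" by blast
    ultimately show ?thesis using assms by (metis card_Un_disjoint finite_Int)
  qed
  have 3: "card (q \<inter> ((s - t) \<union> (t - s))) = card (q \<inter> (s - t)) + card (q \<inter> (t - s))"
  proof -
    have "q \<inter> ((s - t) \<union> (t - s)) = (q \<inter> (s - t)) \<union> (q \<inter> (t - s))" by blast
    moreover have "(q \<inter> (s - t)) \<inter> (q \<inter> (t - s)) = {}" by blast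
    ultimately show ?thesis using assms by (metis card_Un_disjoint finite_Int)
  qed
  show ?thesis using 1 2 3 by simp
qed

lemma char_orth:
  assumes s: "s \<subseteq> {..<N}" and t: "t \<subseteq> {..<N}"
  shows "(\<Sum>q\<in>Pow {..<N}. (-1::real) ^ card (q \<inter> s) * (-1) ^ card (q \<inter> t)) = (if s = t then 2 ^ N else 0)"
proof -
  define d where "d = (s - t) \<union> (t - s)"
  have "(\<Sum>q\<in>Pow {..<N}. (-1::real) ^ card (q \<inter> s) * (-1) ^ card (q \<inter> t)) = (\<Sum>q\<in>Pow {..<N}. (-1::real) ^ card (q \<inter> d))"
  proof (rule sum.cong[OF refl])
    fix q assume "q \<in> Pow {..<N}"
    then have "finite q" using finite_subset by auto
    then have "(-1::real) ^ card (q \<inter> s) * (-1) ^ card (q \<inter> t) = (-1) ^ (card (q \<inter> d) + 2 * card (q \<inter> s \<inter> t))"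
      unfolding d_def by (simp add: power_add[symmetric] card_parity)
    then show "(-1::real) ^ card (q \<inter> s) * (-1) ^ card (q \<inter> t) = (-1) ^ card (q \<inter> d)"
      by (simp add: power_add power_mult)
  qed
  also have "\<dots> = (if s = t then 2 ^ N else 0)"
  proof (cases "s = t")
    case True
    then have "d = {}" unfolding d_def by auto
    then show ?thesis using True by (simp add: card_Pow)
  next
    case False
    then obtain i where "i \<in> d" unfolding d_def by blast
    moreover have "d \<subseteq> {..<N}" unfolding d_def using s t by auto
    ultimately show ?thesis using False char_zero[of "{..<N}" i d] by simp
  qed
  finally show ?thesis .
qed

definition hq :: "nat \<Rightarrow> nat set \<Rightarrow> nat set \<Rightarrow> real" where
  "hq N q' q = (-1) ^ card (q' \<inter> q) / sqrt (2 ^ N)"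

definition Hq :: "nat \<Rightarrow> qmatrix" where
  "Hq N = (\<lambda>(q',a',z') (q,a,z). if a' = a \<and> z' = z then complex_of_real (hq N q' q) else 0)"

lemma apply_Hq:
  assumes "(q,a,z) \<in> Basis N W"
  shows "apply_mat N W (Hq N) \<psi> (q,a,z) = (\<Sum>q'\<in>Pow {..<N}. complex_of_real (hq N q q') * \<psi> (q',a,z))"
  using assms unfolding apply_mat_def sum_Basis Hq_def mem_Basis
  by (simp add: if0_mult if_if_eq_conj[symmetric] sum_if_const sum.delta sum.delta' UNIV_bool cong: if_cong)

lemma hq_orth:
  assumes s: "s \<subseteq> {..<N}" and t: "t \<subseteq> {..<N}"
  shows "(\<Sum>q\<in>Pow {..<N}. hq N q s * hq N q t) = (if s = t then 1 else 0)"
proof -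
  have "(\<Sum>q\<in>Pow {..<N}. hq N q s * hq N q t) = (\<Sum>q\<in>Pow {..<N}. (-1::real) ^ card (q \<inter> s) * (-1) ^ card (q \<inter> t)) / 2 ^ N"
    unfolding hq_def by (simp add: sum_divide_distrib)
  then show ?thesis using char_orth[OF s t] by simp
qed

lemma unitary_Hq: "is_unitary N W (Hq N)"
  unfolding is_unitary_def
proof (intro ballI)
  fix b1 b2 assume b1: "b1 \<in> Basis N W" and b2: "b2 \<in> Basis N W"
  obtain q1 a1 z1 where e1: "b1 = (q1,a1,z1)" by (cases b1) auto
  obtain q2 a2 z2 where e2: "b2 = (q2,a2,z2)" by (cases b2) auto
  have q1: "q1 \<subseteq> {..<N}" and z1: "z1 < W" using b1 e1 unfolding Basis_def by auto
  have q2: "q2 \<subseteq> {..<N}" using b2 e2 unfolding Basis_def by auto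
  have "(\<Sum>b\<in>Basis N W. cnj (Hq N b b1) * Hq N b b2)
     = (\<Sum>q\<in>Pow {..<N}. complex_of_real (hq N q q1) * (if a2 = a1 \<and> z2 = z1 then complex_of_real (hq N q q2) else 0))"
    using z1 unfolding sum_Basis Hq_def e1 e2
    by (simp add: if0_mult mult_if0 cnj_if0 if_if_eq_conj[symmetric] sum_if_const sum.delta sum.delta' UNIV_bool cong: if_cong)
  also have "\<dots> = (if b1 = b2 then 1 else 0)"
  proof (cases "a2 = a1 \<and> z2 = z1")
    case True
    have "(\<Sum>q\<in>Pow {..<N}. complex_of_real (hq N q q1) * complex_of_real (hq N q q2)) = complex_of_real (if q1 = q2 then 1 else 0)"
      unfolding of_real_mult[symmetric] of_real_sum[symmetric] using hq_orth[OF q1 q2] by simp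
    then show ?thesis using True unfolding e1 e2 by auto
  next
    case False
    then have "b1 \<noteq> b2" unfolding e1 e2 by auto
    moreover have "\<not> (a2 = a1 \<and> z2 = z1)" using False by blast
    ultimately show ?thesis by (simp only: if_False if_P mult_zero_right sum.neutral_const)
  qed
  finally show "(\<Sum>b\<in>Basis N W. cnj (Hq N b b1) * Hq N b b2) = (if b1 = b2 then 1 else 0)" .
qed


lemma apply_quasiB:
  assumes "(q,a,z) \<in> Basis N W"
  shows "apply_mat N W (quasiB x) \<psi> (q,a,z) =
     complex_of_real (sqrt (prob0 x q)) * \<psi> (q,a,z) + (if a then 1 else -1) * complex_of_real (sqrt (1 - prob0 x q)) * \<psi> (q,\<not>a,z)"
  using assms unfolding apply_mat_def sum_Basis quasiB_def mem_Basis
  by (cases a) (simp_all add: if0_mult if_if_eq_conj[symmetric] sum_if_const sum.delta sum.delta' UNIV_bool cong: if_cong)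

definition E :: "bool \<Rightarrow> bool \<Rightarrow> complex" where
  "E s a = (if a then (if s then \<i> else -\<i>) else 1) / complex_of_real (sqrt 2)"

definition lam :: "nat set \<Rightarrow> nat set \<Rightarrow> complex" where
  "lam x q = complex_of_real (sqrt (prob0 x q)) - \<i> * complex_of_real (sqrt (1 - prob0 x q))"

definition ev :: "nat set \<Rightarrow> nat set \<Rightarrow> bool \<Rightarrow> complex" where
  "ev x q s = (if s then lam x q else cnj (lam x q))"

lemma apply_quasiB_E:
  assumes "(q,a,z) \<in> Basis N W"
    and "\<And>a'. \<psi> (q,a',z) = g * E s a'"
  shows "apply_mat N W (quasiB x) \<psi> (q,a,z) = g * ev x q s * E s a"
  unfolding apply_quasiB[OF assms(1)] assms(2)
  by (cases a; cases s) (simp_all add: E_def ev_def lam_def algebra_simps)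


definition Zm :: "bool \<Rightarrow> bool \<Rightarrow> complex" where
  "Zm a' a = (if a' = a then (if a then -1 else 1) else 0)"
definition Im :: "bool \<Rightarrow> bool \<Rightarrow> complex" where
  "Im a' a = (if a' = a then 1 else 0)"
definition Prep :: "bool \<Rightarrow> bool \<Rightarrow> bool \<Rightarrow> complex" where
  "Prep s a' a = E (if a then \<not> s else s) a'"
definition Unprep :: "bool \<Rightarrow> bool \<Rightarrow> bool \<Rightarrow> complex" where
  "Unprep s a' a = cnj (Prep s a a')"

lemma sqrt2_sq: "complex_of_real (sqrt 2) * complex_of_real (sqrt 2) = 2"
  by (simp flip: of_real_mult)

lemma unitary2_Zm: "unitary2 Zm" unfolding unitary2_def Zm_def by (auto simp: UNIV_bool)
lemma unitary2_Im: "unitary2 Im" unfolding unitary2_def Im_def by (auto simp: UNIV_bool)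
lemma unitary2_Prep: "unitary2 (Prep s)"
  unfolding unitary2_def Prep_def E_def
  by (cases s) (auto simp: UNIV_bool sqrt2_sq field_simps)
lemma unitary2_Unprep: "unitary2 (Unprep s)"
  unfolding unitary2_def Unprep_def Prep_def E_def
  by (cases s) (auto simp: UNIV_bool sqrt2_sq field_simps)
lemma unitary2_flip: "unitary2 (if P then Zm else Im)"
  using unitary2_Zm unitary2_Im by simp

lemma apply_Ctl_flip:
  assumes "(q,a,z) \<in> Basis N W"
    and "\<And>a'. \<psi> (q,a',z) = g * E s a'"
  shows "apply_mat N W (Ctl (\<lambda>z. if P z then Zm else Im)) \<psi> (q,a,z) = g * E (s \<noteq> P z) a"
  unfolding apply_Ctl[OF assms(1)] assms(2)
  by (cases a; cases s; cases "P z") (simp_all add: E_def Zm_def Im_def)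

lemma apply_Ctl_Unprep:
  assumes "(q,a,z) \<in> Basis N W"
    and "\<And>a'. \<psi> (q,a',z) = g * E (S z) a'"
  shows "apply_mat N W (Ctl (\<lambda>z. Unprep (S z))) \<psi> (q,a,z) = (if a then 0 else g)"
  unfolding apply_Ctl[OF assms(1)] assms(2)
  by (cases a; cases "S z") (simp_all add: E_def Unprep_def Prep_def field_simps sqrt2_sq)

lemma apply_Ctl_Prep:
  assumes "(q,a,z) \<in> Basis N W"
    and "\<And>a'. \<psi> (q,a',z) = (if a' then 0 else g)"
  shows "apply_mat N W (Ctl (\<lambda>z. Prep (S z))) \<psi> (q,a,z) = g * E (S z) a"
  unfolding apply_Ctl[OF assms(1)] assms(2)
  by (cases a; cases "S z") (simp_all add: Prep_def)


definition step :: "nat \<Rightarrow> nat \<Rightarrow> nat set \<Rightarrow> qmatrix \<Rightarrow> qstate \<Rightarrow> qstate" where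
  "step N W x U \<psi> = apply_mat N W (quasiB x) (apply_mat N W U \<psi>)"

lemma run_snoc: "run N W x (Us @ [V]) \<psi> = apply_mat N W V (fold (step N W x) Us \<psi>)"
proof (induction Us arbitrary: \<psi>)
  case Nil then show ?case by simp
next
  case (Cons U Us)
  show ?case
  proof (cases Us)
    case Nil then show ?thesis by (simp add: step_def)
  next
    case (Cons U' Us')
    then show ?thesis using Cons.IH by (simp add: step_def)
  qed
qed

definition Fl :: "nat \<Rightarrow> qmatrix" where
  "Fl t = Ctl (\<lambda>z. if z = t then Zm else Im)"

definition Phi :: "nat set \<Rightarrow> (nat \<Rightarrow> nat \<Rightarrow> bool) \<Rightarrow> nat \<Rightarrow> nat set \<Rightarrow> nat \<Rightarrow> complex" where
  "Phi x L t q z = (\<Prod>\<tau><t. ev x q (L \<tau> z))"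

definition Pst :: "nat set \<Rightarrow> (nat set \<Rightarrow> nat \<Rightarrow> complex) \<Rightarrow> (nat \<Rightarrow> nat \<Rightarrow> bool) \<Rightarrow> nat \<Rightarrow> qstate" where
  "Pst x G L t = (\<lambda>(q,a,z). G q z * Phi x L (Suc t) q z * E (L t z) a)"

lemma loop_step:
  assumes L: "\<And>t z. L (Suc t) z = (L t z \<noteq> (z = Suc t))"
    and ag: "agree N W \<psi> (Pst x G L t)"
  shows "agree N W (step N W x (Fl (Suc t)) \<psi>) (Pst x G L (Suc t))"
proof -
  define S where "S = (\<lambda>(q,a,z). G q z * Phi x L (Suc t) q z * E (L (Suc t) z) a)"
  have 1: "agree N W (apply_mat N W (Fl (Suc t)) \<psi>) S"
    unfolding agree_def
  proof (intro ballI)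
    fix b assume b: "b \<in> Basis N W"
    obtain q a z where e: "b = (q,a,z)" by (cases b) auto
    have "apply_mat N W (Fl (Suc t)) \<psi> b = apply_mat N W (Fl (Suc t)) (Pst x G L t) b"
      using apply_mat_cong[OF ag] by simp
    also have "\<dots> = G q z * Phi x L (Suc t) q z * E (L t z \<noteq> (z = Suc t)) a"
      unfolding e Fl_def
      by (rule apply_Ctl_flip[of q a z N W _ "G q z * Phi x L (Suc t) q z"]) (use b e in \<open>auto simp: Pst_def\<close>)
    finally show "apply_mat N W (Fl (Suc t)) \<psi> b = S b" unfolding S_def e using L by simp
  qed
  show ?thesis
    unfolding agree_def
  proof (intro ballI)
    fix b assume b: "b \<in> Basis N W"
    obtain q a z where e: "b = (q,a,z)" by (cases b) auto
    have "step N W x (Fl (Suc t)) \<psi> b = apply_mat N W (quasiB x) S b"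
      unfolding step_def using apply_mat_cong[OF 1] by simp
    also have "\<dots> = G q z * Phi x L (Suc t) q z * ev x q (L (Suc t) z) * E (L (Suc t) z) a"
      unfolding e by (rule apply_quasiB_E) (use b e in \<open>auto simp: S_def\<close>)
    also have "\<dots> = Pst x G L (Suc t) b"
      unfolding e Pst_def Phi_def by (simp add: mult_ac)
    finally show "step N W x (Fl (Suc t)) \<psi> b = Pst x G L (Suc t) b" .
  qed
qed

lemma loop:
  assumes L: "\<And>t z. L (Suc t) z = (L t z \<noteq> (z = Suc t))"
  shows "agree N W \<psi> (Pst x G L t) \<Longrightarrow> agree N W (fold (step N W x) (map Fl [Suc t..<Suc t + k]) \<psi>) (Pst x G L (t + k))"
proof (induction k arbitrary: t \<psi>)
  case 0 then show ?case by simp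
next
  case (Suc k)
  have e: "[Suc t..<Suc t + Suc k] = Suc t # [Suc (Suc t)..<Suc (Suc t) + k]"
    by (simp add: upt_conv_Cons)
  have "agree N W (step N W x (Fl (Suc t)) \<psi>) (Pst x G L (Suc t))"
    by (rule loop_step[OF L Suc.prems])
  from Suc.IH[OF this] show ?case unfolding e by simp
qed


definition Hh :: "(nat \<Rightarrow> real) \<Rightarrow> nat \<Rightarrow> nat \<Rightarrow> complex" where
  "Hh v z' z = complex_of_real ((if z' = z then 1 else 0) - 2 * v z' * v z)"

lemma Hh_unitary:
  assumes v: "(\<Sum>z<W. (v z)\<^sup>2) = 1" and z1: "z1 < W" and z2: "z2 < W"
  shows "(\<Sum>z<W. cnj (Hh v z z1) * Hh v z z2) = (if z1 = z2 then 1 else 0)"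
proof -
  have "(\<Sum>z<W. cnj (Hh v z z1) * Hh v z z2) = complex_of_real (\<Sum>z<W. ((if z = z1 then 1 else 0) - 2 * v z * v z1) * ((if z = z2 then 1 else 0) - 2 * v z * v z2))"
    unfolding Hh_def by (simp add: of_real_sum)
  also have "(\<Sum>z<W. ((if z = z1 then 1 else 0) - 2 * v z * v z1) * ((if z = z2 then 1 else 0) - 2 * v z * v z2))
     = (\<Sum>z<W. (if z = z1 then (if z = z2 then 1 else 0) else 0) - 2 * ((if z = z1 then v z else 0) * v z2)
       - 2 * ((if z = z2 then v z else 0) * v z1) + 4 * v z1 * v z2 * (v z)\<^sup>2)"
  proof (rule sum.cong[OF refl])
    fix z
    have r: "\<And>a b c :: real. (a - 2 * c * v z1) * (b - 2 * c * v z2) = a * b - 2 * (a * c) * v z2 - 2 * (b * c) * v z1 + 4 * v z1 * v z2 * c\<^sup>2"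
      by (simp add: algebra_simps power2_eq_square)
    show "((if z = z1 then 1 else 0) - 2 * v z * v z1) * ((if z = z2 then 1 else 0) - 2 * v z * v z2) =
      (if z = z1 then (if z = z2 then 1 else 0) else 0) - 2 * ((if z = z1 then v z else 0) * v z2)
       - 2 * ((if z = z2 then v z else 0) * v z1) + 4 * v z1 * v z2 * (v z)\<^sup>2"
      unfolding r by simp
  qed
  also have "\<dots> = (if z1 = z2 then 1 else 0)"
  proof -
    have s1: "(\<Sum>z<W. (if z = z1 then (if z = z2 then 1 else 0) else 0)) = (if z1 = z2 then 1 else (0::real))"
      using z1 by (simp add: sum.delta')
    have s2: "(\<Sum>z<W. 2 * ((if z = z1 then v z else 0) * v z2)) = 2 * v z1 * v z2"
      using z1 by (simp add: if0_mult_real sum.delta' flip: sum_distrib_left)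
    have s3: "(\<Sum>z<W. 2 * ((if z = z2 then v z else 0) * v z1)) = 2 * v z1 * v z2"
      using z2 by (simp add: if0_mult_real sum.delta' flip: sum_distrib_left)
    have s4: "(\<Sum>z<W. 4 * v z1 * v z2 * (v z)\<^sup>2) = 4 * v z1 * v z2"
      using v by (simp flip: sum_distrib_left)
    show ?thesis by (simp only: sum.distrib sum_subtractf s1 s2 s3 s4)
  qed
  finally show ?thesis by simp
qed

lemma unitary_Rz_Hh: "(\<Sum>z<W. (v z)\<^sup>2) = 1 \<Longrightarrow> is_unitary N W (Rz (Hh v))"
  by (rule unitary_Rz) (rule Hh_unitary)


definition rr :: "nat \<Rightarrow> real" where "rr W = 1 / sqrt (real W)"
definition v1 :: "nat \<Rightarrow> nat \<Rightarrow> real" where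
  "v1 W z = ((if z = 0 then 1 else 0) - rr W) / sqrt (2 - 2 * rr W)"
definition vA :: "nat \<Rightarrow> nat \<Rightarrow> real" where
  "vA W z = (-1) ^ z * rr W"

lemma rr_facts: assumes "W \<ge> 2" shows "0 < rr W" "rr W < 1" "real W * (rr W)\<^sup>2 = 1"
proof -
  show "0 < rr W" using assms by (simp add: rr_def)
  have "1 < sqrt (real W)" using assms by simp
  then show "rr W < 1" unfolding rr_def by simp
  show "real W * (rr W)\<^sup>2 = 1" using assms by (simp add: rr_def power_divide)
qed

lemma sum_vA: "W \<ge> 2 \<Longrightarrow> (\<Sum>z<W. (vA W z)\<^sup>2) = 1"
proof -
  assume W: "W \<ge> 2"
  have m: "((-1::real)^z)\<^sup>2 = 1" for z by (induct z) (auto simp: power2_eq_square)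
  show ?thesis using rr_facts(3)[OF W] by (simp add: vA_def power_mult_distrib m)
qed

lemma sum_sq_split: "(W::nat) \<ge> 1 \<Longrightarrow> (\<Sum>z<W. (f z)::real) = f 0 + (\<Sum>z\<in>{1..<W}. f z)"
proof -
  assume "W \<ge> 1"
  then have "{..<W} = insert 0 {1..<W}" by (auto simp: not_le)
  then show ?thesis by simp
qed

lemma sum_v1: assumes W: "W \<ge> 2" shows "(\<Sum>z<W. (v1 W z)\<^sup>2) = 1"
proof -
  have r: "0 < rr W" "rr W < 1" "real W * (rr W)\<^sup>2 = 1" using rr_facts[OF W] by auto
  have pos: "0 < 2 - 2 * rr W" using r by simp
  have "(\<Sum>z<W. (v1 W z)\<^sup>2) = (\<Sum>z<W. ((if z = 0 then 1 else 0) - rr W)\<^sup>2) / (2 - 2 * rr W)"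
    unfolding v1_def using pos by (simp add: power_divide sum_divide_distrib)
  also have "(\<Sum>z<W. ((if z = 0 then 1 else 0) - rr W)\<^sup>2) = (1 - rr W)\<^sup>2 + (\<Sum>z\<in>{1..<W}. (rr W)\<^sup>2)"
    using W by (subst sum_sq_split) auto
  also have "\<dots> = (1 - rr W)\<^sup>2 + (real W - 1) * (rr W)\<^sup>2" using W by (simp add: of_nat_diff)
  also have "\<dots> = 2 - 2 * rr W" using r(3) by (simp add: algebra_simps power2_eq_square)
  finally show ?thesis using pos by simp
qed

lemma Hh_v1_col0: assumes W: "W \<ge> 2" shows "Hh (v1 W) z 0 = rr W" "Hh (v1 W) 0 z = rr W"
proof -
  have r: "0 < rr W" "rr W < 1" using rr_facts[OF W] by auto
  have pos: "0 < 2 - 2 * rr W" using r by simp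
  have s: "sqrt (2 - 2 * rr W) * sqrt (2 - 2 * rr W) = 2 - 2 * rr W" using pos by simp
  have "(if z = 0 then 1 else 0) - 2 * v1 W z * v1 W 0 = rr W"
    unfolding v1_def using pos s by (simp add: field_simps)
  then show "Hh (v1 W) z 0 = rr W" "Hh (v1 W) 0 z = rr W" unfolding Hh_def by (auto simp: mult_ac)
qed


lemma prob0_bounds: "0 \<le> prob0 x q" "prob0 x q \<le> 1"
  unfolding prob0_def Let_def by (auto simp: real_sqrt_le_1_iff)

lemma lam_cnj: "lam x q * cnj (lam x q) = 1"
proof -
  have c: "sqrt (prob0 x q) * sqrt (prob0 x q) = prob0 x q" using prob0_bounds by simp
  have s: "sqrt (1 - prob0 x q) * sqrt (1 - prob0 x q) = 1 - prob0 x q" using prob0_bounds by simp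
  have "lam x q * cnj (lam x q) = complex_of_real (sqrt (prob0 x q) * sqrt (prob0 x q) + sqrt (1 - prob0 x q) * sqrt (1 - prob0 x q))"
    unfolding lam_def by (simp add: algebra_simps del: real_sqrt_mult_self flip: of_real_mult)
  then show ?thesis unfolding c s by simp
qed

lemma cnj_lam_cnj: "cnj (lam x q) * lam x q = 1" using lam_cnj by (simp add: mult.commute)

lemma Phi_c: assumes "z \<le> m" shows "Phi x (\<lambda>t z. t < z) m q z = lam x q ^ z * cnj (lam x q) ^ (m - z)"
proof -
  have a: "{..<m} \<inter> {\<tau>. \<tau> < z} = {..<z}" using assms by auto
  have b: "{..<m} \<inter> - {\<tau>. \<tau> < z} = {z..<m}" by auto
  show ?thesis unfolding Phi_def ev_def
    by (simp add: prod.If_cases a b)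
qed

lemma Phi_u: assumes "z \<le> m" shows "Phi x (\<lambda>t z. z \<le> t) m q z = lam x q ^ (m - z) * cnj (lam x q) ^ z"
proof -
  have a: "{..<m} \<inter> {\<tau>. z \<le> \<tau>} = {z..<m}" by auto
  have b: "{..<m} \<inter> - {\<tau>. z \<le> \<tau>} = {..<z}" using assms by auto
  show ?thesis unfolding Phi_def ev_def
    by (simp add: prod.If_cases a b)
qed

lemma Phi_prod: assumes "z \<le> m" shows "Phi x (\<lambda>t z. t < z) m q z * Phi x (\<lambda>t z. z \<le> t) m q z = 1"
proof -
  have "Phi x (\<lambda>t z. t < z) m q z * Phi x (\<lambda>t z. z \<le> t) m q z = (lam x q * cnj (lam x q)) ^ z * (cnj (lam x q) * lam x q) ^ (m - z)"
    unfolding Phi_c[OF assms] Phi_u[OF assms] by (simp add: power_mult_distrib mult_ac)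
  then show ?thesis by (simp add: lam_cnj cnj_lam_cnj)
qed

lemma Phi_cnj: assumes "z \<le> m" shows "Phi x (\<lambda>t z. z \<le> t) m q z = cnj (Phi x (\<lambda>t z. t < z) m q z)"
  unfolding Phi_c[OF assms] Phi_u[OF assms] by (simp add: mult.commute)


lemma norm_lam: "norm (lam x q) = 1"
proof -
  have "complex_of_real ((norm (lam x q))\<^sup>2) = 1" using lam_cnj complex_norm_square by metis
  then have "(norm (lam x q))\<^sup>2 = 1" using of_real_eq_1_iff by blast
  then show ?thesis using norm_ge_zero[of "lam x q"] by (auto simp: power2_eq_1_iff)
qed

definition Sg :: "nat set \<Rightarrow> nat \<Rightarrow> nat set \<Rightarrow> complex" where
  "Sg x m q = (\<Sum>z<Suc m. (-1) ^ z * (lam x q ^ z * cnj (lam x q) ^ (m - z)))"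

lemma Sg_odd:
  assumes "odd (card (x \<inter> q))"
  shows "Sg x m q = of_nat (Suc m) * \<i> ^ m"
proof -
  have nz: "card (x \<inter> q) \<noteq> 0" using assms by (metis even_zero)
  have p: "prob0 x q = 0" using assms nz unfolding prob0_def Let_def by simp
  have l: "lam x q = - \<i>" unfolding lam_def p by simp
  have "(-1) ^ z * (lam x q ^ z * cnj (lam x q) ^ (m - z)) = \<i> ^ m" if "z < Suc m" for z
  proof -
    have ii: "(-1::complex) ^ z * (- \<i>) ^ z = \<i> ^ z" by (induct z) auto
    have "(-1) ^ z * (lam x q ^ z * cnj (lam x q) ^ (m - z)) = ((-1) ^ z * (- \<i>) ^ z) * \<i> ^ (m - z)"
      unfolding l by (simp add: mult.assoc)
    also have "\<dots> = \<i> ^ (z + (m - z))" unfolding ii by (simp add: power_add)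
    also have "z + (m - z) = m" using that by simp
    finally show ?thesis .
  qed
  then show ?thesis unfolding Sg_def by simp
qed

lemma Sg_even:
  assumes "even (card (x \<inter> q))"
  shows "(norm (Sg x m q))\<^sup>2 \<le> 1 / prob0 x q" "0 < prob0 x q"
proof -
  define c where "c = sqrt (prob0 x q)"
  define s where "s = sqrt (1 - prob0 x q)"
  define l where "l = lam x q"
  show p0: "0 < prob0 x q" using assms unfolding prob0_def Let_def by auto
  have c0: "0 < c" unfolding c_def using p0 by simp
  have cs: "c * c + s * s = 1" unfolding c_def s_def using prob0_bounds by simp
  have l_def': "l = complex_of_real c - \<i> * complex_of_real s" unfolding l_def lam_def c_def s_def by simp
  have lc: "l * cnj l = 1" "cnj l * l = 1" unfolding l_def using lam_cnj cnj_lam_cnj by auto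
  have nl: "norm l = 1" unfolding l_def by (rule norm_lam)
  define \<mu> where "\<mu> = - (l * l)"
  have key: "1 - \<mu> = 2 * complex_of_real c * l"
  proof -
    have cs': "complex_of_real c * complex_of_real c + complex_of_real s * complex_of_real s = 1"
      using cs by (metis of_real_1 of_real_add of_real_mult)
    then have ss: "complex_of_real s * complex_of_real s = 1 - complex_of_real c * complex_of_real c" by (simp add: algebra_simps)
    have ll: "l * l = complex_of_real c * complex_of_real c - 2 * \<i> * complex_of_real c * complex_of_real s - complex_of_real s * complex_of_real s"
      unfolding l_def' by (simp add: algebra_simps)
    show ?thesis unfolding \<mu>_def ll l_def' using cs' by (simp add: algebra_simps)
  qed
  have nm1: "norm (\<mu> - 1) = 2 * c"
  proof -
    have "norm (\<mu> - 1) = norm (1 - \<mu>)" by (simp add: norm_minus_commute)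
    also have "\<dots> = 2 * c" unfolding key using c0 nl by (simp add: norm_mult)
    finally show ?thesis .
  qed
  have mu1: "\<mu> \<noteq> 1" using nm1 c0 by auto
  have nmu: "norm \<mu> = 1" unfolding \<mu>_def using nl by (simp add: norm_mult)
  have trm: "(-1) ^ z * (l ^ z * cnj l ^ (m - z)) = cnj l ^ m * \<mu> ^ z" if "z < Suc m" for z
  proof -
    have e1: "cnj l ^ m = cnj l ^ (m - z) * cnj l ^ z" using that by (simp flip: power_add)
    have mm: "\<mu> = (-1) * (l * l)" unfolding \<mu>_def by simp
    have e2: "\<mu> ^ z = (-1) ^ z * (l ^ z * l ^ z)" unfolding mm
      by (simp only: power_mult_distrib)
    have e3: "cnj l ^ z * l ^ z = 1" by (simp only: power_mult_distrib[symmetric] lc power_one)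
    have "cnj l ^ m * \<mu> ^ z = ((-1) ^ z * (l ^ z * cnj l ^ (m - z))) * (cnj l ^ z * l ^ z)"
      unfolding e1 e2 by (simp only: mult_ac)
    then show ?thesis unfolding e3 by simp
  qed
  have "Sg x m q = cnj l ^ m * (\<Sum>z<Suc m. \<mu> ^ z)"
    unfolding Sg_def sum_distrib_left l_def[symmetric] using trm by simp
  also have "(\<Sum>z<Suc m. \<mu> ^ z) = (\<mu> ^ Suc m - 1) / (\<mu> - 1)"
    using mu1 by (rule geometric_sum)
  finally have "norm (Sg x m q) = norm (\<mu> ^ Suc m - 1) / (2 * c)"
    using nl nm1 by (simp add: norm_mult norm_divide norm_power)
  also have "\<dots> \<le> 2 / (2 * c)"
  proof (rule divide_right_mono)
    have "norm (\<mu> ^ Suc m - 1) \<le> norm (\<mu> ^ Suc m) + norm (1::complex)" by (rule norm_triangle_ineq4)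
    moreover have "norm (\<mu> ^ Suc m) = 1" using nmu by (simp only: norm_power power_one)
    ultimately show "norm (\<mu> ^ Suc m - 1) \<le> 2" by simp
  qed (use c0 in simp)
  finally have n: "norm (Sg x m q) \<le> 1 / c" using c0 by simp
  have "(norm (Sg x m q))\<^sup>2 \<le> (1 / c)\<^sup>2" using n by (simp add: power_mono)
  also have "(1 / c)\<^sup>2 = 1 / prob0 x q" unfolding c_def using p0 by (simp add: power_divide)
  finally show "(norm (Sg x m q))\<^sup>2 \<le> 1 / prob0 x q" .
qed


lemma step_E:
  assumes "\<And>q a z. (q,a,z) \<in> Basis N W \<Longrightarrow> apply_mat N W U \<psi> (q,a,z) = g q z * E (L z) a"
  shows "agree N W (step N W x U \<psi>) (Pst x g (\<lambda>t. L) 0)"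
  unfolding agree_def
proof (intro ballI)
  fix b assume b: "b \<in> Basis N W"
  obtain q a z where e: "b = (q,a,z)" by (cases b) auto
  define S where "S = (\<lambda>(q,a,z). g q z * E (L z) a)"
  have ag: "agree N W (apply_mat N W U \<psi>) S" unfolding agree_def S_def using assms by auto
  have "step N W x U \<psi> b = apply_mat N W (quasiB x) S b"
    unfolding step_def using apply_mat_cong[OF ag] by simp
  also have "\<dots> = g q z * ev x q (L z) * E (L z) a"
    unfolding e by (rule apply_quasiB_E) (use b e in \<open>auto simp: S_def\<close>)
  also have "\<dots> = Pst x g (\<lambda>t. L) 0 b" unfolding e Pst_def Phi_def by simp
  finally show "step N W x U \<psi> b = Pst x g (\<lambda>t. L) 0 b" .
qed

definition hN :: "nat \<Rightarrow> real" where "hN N = 1 / sqrt (2 ^ N)"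

lemma hq_empty: "hq N q {} = hN N" unfolding hq_def hN_def by simp

definition U0 :: "nat \<Rightarrow> nat \<Rightarrow> qmatrix" where
  "U0 N W = mmul N W (Ctl (\<lambda>z. Prep (0 < z))) (mmul N W (Rz (Hh (v1 W))) (Hq N))"

lemma U0_apply:
  assumes W: "W \<ge> 2" and b: "(q,a,z) \<in> Basis N W"
  shows "apply_mat N W (U0 N W) init_state (q,a,z) = complex_of_real (hN N * rr W) * E (0 < z) a"
proof -
  have q: "q \<subseteq> {..<N}" and z: "z < W" using b by (auto simp: mem_Basis)
  have H: "apply_mat N W (Hq N) init_state (q,a',z') = (if a' = False \<and> z' = 0 then complex_of_real (hN N) else 0)"
    if "z' < W" for a' z'
  proof -
    have "apply_mat N W (Hq N) init_state (q,a',z') = (\<Sum>q'\<in>Pow {..<N}. complex_of_real (hq N q q') * init_state (q',a',z'))"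
      using apply_Hq[of q a' z' N W] q that by (simp add: mem_Basis)
    also have "\<dots> = (\<Sum>q'\<in>Pow {..<N}. if q' = {} then (if a' = False \<and> z' = 0 then complex_of_real (hq N q q') else 0) else 0)"
      unfolding init_state_def by (intro sum.cong refl) auto
    also have "\<dots> = (if a' = False \<and> z' = 0 then complex_of_real (hN N) else 0)"
      by (simp add: sum.delta hq_empty)
    finally show ?thesis .
  qed
  have R: "apply_mat N W (Rz (Hh (v1 W))) (apply_mat N W (Hq N) init_state) (q,a',z) = (if a' then 0 else complex_of_real (hN N * rr W))" for a'
  proof -
    have "apply_mat N W (Rz (Hh (v1 W))) (apply_mat N W (Hq N) init_state) (q,a',z)
        = (\<Sum>z'<W. Hh (v1 W) z z' * (if a' = False \<and> z' = 0 then complex_of_real (hN N) else 0))"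
      using apply_Rz[of q a' z N W] q z H by (simp add: mem_Basis)
    also have "\<dots> = (if a' then 0 else complex_of_real (hN N * rr W))"
      using W Hh_v1_col0(1)[OF W, of z] by (simp add: mult_if0 sum_if_const sum.delta' mult.commute)
    finally show ?thesis .
  qed
  show ?thesis unfolding U0_def apply_mmul
    by (rule apply_Ctl_Prep[OF b]) (use R in simp)
qed


definition Umid :: "nat \<Rightarrow> nat \<Rightarrow> nat \<Rightarrow> qmatrix" where
  "Umid N W m = mmul N W (Ctl (\<lambda>z. Prep (z \<le> 0))) (mmul N W (Rz (Hh (vA W))) (Ctl (\<lambda>z. Unprep (m - 1 < z))))"

definition Ufin :: "nat \<Rightarrow> nat \<Rightarrow> nat \<Rightarrow> qmatrix" where
  "Ufin N W m = mmul N W (Hq N) (mmul N W (Rz (Hh (v1 W))) (Ctl (\<lambda>z. Unprep (z \<le> m - 1))))"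

lemma Umid_apply:
  assumes m: "m \<ge> 1" and ag: "agree N W \<psi> (Pst x G (\<lambda>t z. t < z) (m - 1))"
    and b: "(q,a,z) \<in> Basis N W"
  shows "apply_mat N W (Umid N W m) \<psi> (q,a,z) =
    (\<Sum>z'<W. Hh (vA W) z z' * (G q z' * Phi x (\<lambda>t z. t < z) m q z')) * E (z \<le> 0) a"
proof -
  have q: "q \<subseteq> {..<N}" and z: "z < W" using b by (auto simp: mem_Basis)
  have sm: "Suc (m - 1) = m" using m by simp
  have C: "apply_mat N W (Ctl (\<lambda>z. Unprep (m - 1 < z))) \<psi> (q,a',z') = (if a' then 0 else G q z' * Phi x (\<lambda>t z. t < z) m q z')"
    if "z' < W" for a' z'
  proof -
    have "apply_mat N W (Ctl (\<lambda>z. Unprep (m - 1 < z))) \<psi> (q,a',z') = apply_mat N W (Ctl (\<lambda>z. Unprep (m - 1 < z))) (Pst x G (\<lambda>t z. t < z) (m - 1)) (q,a',z')"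
      using apply_mat_cong[OF ag] by simp
    also have "\<dots> = (if a' then 0 else G q z' * Phi x (\<lambda>t z. t < z) m q z')"
      by (rule apply_Ctl_Unprep[where S = "\<lambda>z. m - 1 < z"]) (use q that sm in \<open>auto simp: mem_Basis Pst_def\<close>)
    finally show ?thesis .
  qed
  have R: "apply_mat N W (Rz (Hh (vA W))) (apply_mat N W (Ctl (\<lambda>z. Unprep (m - 1 < z))) \<psi>) (q,a',z)
     = (if a' then 0 else (\<Sum>z'<W. Hh (vA W) z z' * (G q z' * Phi x (\<lambda>t z. t < z) m q z')))" for a'
  proof -
    have "apply_mat N W (Rz (Hh (vA W))) (apply_mat N W (Ctl (\<lambda>z. Unprep (m - 1 < z))) \<psi>) (q,a',z)
      = (\<Sum>z'<W. Hh (vA W) z z' * apply_mat N W (Ctl (\<lambda>z. Unprep (m - 1 < z))) \<psi> (q,a',z'))"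
      using apply_Rz[of q a' z N W] q z by (simp add: mem_Basis)
    also have "\<dots> = (\<Sum>z'<W. Hh (vA W) z z' * (if a' then 0 else G q z' * Phi x (\<lambda>t z. t < z) m q z'))"
      by (intro sum.cong refl) (use C in auto)
    finally show ?thesis by (cases a') simp_all
  qed
  show ?thesis unfolding Umid_def apply_mmul
    by (rule apply_Ctl_Prep[OF b, where S = "\<lambda>z. z \<le> 0"]) (rule R)
qed

lemma Ufin_apply:
  assumes m: "m \<ge> 1" and ag: "agree N W \<psi> (Pst x G (\<lambda>t z. z \<le> t) (m - 1))"
    and W: "W \<ge> 2" and x: "x \<subseteq> {..<N}"
  shows "apply_mat N W (Ufin N W m) \<psi> (x,False,0) =
    (\<Sum>q\<in>Pow {..<N}. complex_of_real (hq N x q) * (complex_of_real (rr W) * (\<Sum>z<W. G q z * Phi x (\<lambda>t z. z \<le> t) m q z)))"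
proof -
  have sm: "Suc (m - 1) = m" using m by simp
  have C: "apply_mat N W (Ctl (\<lambda>z. Unprep (z \<le> m - 1))) \<psi> (q,a',z') = (if a' then 0 else G q z' * Phi x (\<lambda>t z. z \<le> t) m q z')"
    if "z' < W" "q \<subseteq> {..<N}" for q a' z'
  proof -
    have "apply_mat N W (Ctl (\<lambda>z. Unprep (z \<le> m - 1))) \<psi> (q,a',z') = apply_mat N W (Ctl (\<lambda>z. Unprep (z \<le> m - 1))) (Pst x G (\<lambda>t z. z \<le> t) (m - 1)) (q,a',z')"
      using apply_mat_cong[OF ag] by simp
    also have "\<dots> = (if a' then 0 else G q z' * Phi x (\<lambda>t z. z \<le> t) m q z')"
      by (rule apply_Ctl_Unprep[where S = "\<lambda>z. z \<le> m - 1"]) (use that sm in \<open>auto simp: mem_Basis Pst_def\<close>)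
    finally show ?thesis .
  qed
  have R: "apply_mat N W (Rz (Hh (v1 W))) (apply_mat N W (Ctl (\<lambda>z. Unprep (z \<le> m - 1))) \<psi>) (q,False,0)
     = complex_of_real (rr W) * (\<Sum>z<W. G q z * Phi x (\<lambda>t z. z \<le> t) m q z)" if q: "q \<subseteq> {..<N}" for q
  proof -
    have "apply_mat N W (Rz (Hh (v1 W))) (apply_mat N W (Ctl (\<lambda>z. Unprep (z \<le> m - 1))) \<psi>) (q,False,0)
      = (\<Sum>z'<W. Hh (v1 W) 0 z' * apply_mat N W (Ctl (\<lambda>z. Unprep (z \<le> m - 1))) \<psi> (q,False,z'))"
      using apply_Rz[of q False 0 N W] q W by (simp add: mem_Basis)
    also have "\<dots> = (\<Sum>z'<W. complex_of_real (rr W) * (G q z' * Phi x (\<lambda>t z. z \<le> t) m q z'))"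
      by (intro sum.cong refl) (use C q Hh_v1_col0(2)[OF W] in \<open>auto simp del: Hh_def\<close>)
    finally show ?thesis by (simp add: sum_distrib_left)
  qed
  have "apply_mat N W (Ufin N W m) \<psi> (x,False,0) = (\<Sum>q\<in>Pow {..<N}. complex_of_real (hq N x q) *
      apply_mat N W (Rz (Hh (v1 W))) (apply_mat N W (Ctl (\<lambda>z. Unprep (z \<le> m - 1))) \<psi>) (q,False,0))"
    unfolding Ufin_def apply_mmul using apply_Hq[of x False 0 N W] x W by (simp add: mem_Basis)
  also have "\<dots> = (\<Sum>q\<in>Pow {..<N}. complex_of_real (hq N x q) * (complex_of_real (rr W) * (\<Sum>z<W. G q z * Phi x (\<lambda>t z. z \<le> t) m q z)))"
  proof (intro sum.cong refl)
    fix q assume "q \<in> Pow {..<N}"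
    then show "complex_of_real (hq N x q) * apply_mat N W (Rz (Hh (v1 W))) (apply_mat N W (Ctl (\<lambda>z. Unprep (z \<le> m - 1))) \<psi>) (q,False,0)
      = complex_of_real (hq N x q) * (complex_of_real (rr W) * (\<Sum>z<W. G q z * Phi x (\<lambda>t z. z \<le> t) m q z))"
      using R by simp
  qed
  finally show ?thesis .
qed


lemma inner_sum:
  assumes W: "W = Suc m" and m: "m \<ge> 1"
  shows "complex_of_real (rr W) * (\<Sum>z<W. (\<Sum>z'<W. Hh (vA W) z z' * (complex_of_real (hN N * rr W) * Phi x (\<lambda>t z. t < z) m q z'))
            * Phi x (\<lambda>t z. z \<le> t) m q z)
       = complex_of_real (hN N * (1 - 2 * (rr W) ^ 4 * (norm (Sg x m q))\<^sup>2))"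
proof -
  define Pc where "Pc = (\<lambda>z. Phi x (\<lambda>t z. t < z) m q z)"
  define Pu where "Pu = (\<lambda>z. Phi x (\<lambda>t z. z \<le> t) m q z)"
  define r where "r = rr W"
  define hr where "hr = complex_of_real (hN N * rr W)"
  define Y where "Y = (\<Sum>z<W. complex_of_real (vA W z) * Pc z)"
  have W2: "W \<ge> 2" using W m by simp
  have rW: "real W * r\<^sup>2 = 1" unfolding r_def using rr_facts(3)[OF W2] .
  have PP: "Pc z * Pu z = 1" if "z < W" for z using Phi_prod[of z m x q] that W unfolding Pc_def Pu_def by simp
  have Pcnj: "Pu z = cnj (Pc z)" if "z < W" for z using Phi_cnj[of z m x q] that W unfolding Pc_def Pu_def by simp
  have a: "(\<Sum>z<W. (\<Sum>z'<W. Hh (vA W) z z' * (hr * Pc z')) * Pu z)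
     = hr * ((\<Sum>z<W. Pc z * Pu z) - 2 * (\<Sum>z<W. complex_of_real (vA W z) * Pu z) * Y)"
  proof -
    have "(\<Sum>z<W. (\<Sum>z'<W. Hh (vA W) z z' * (hr * Pc z')) * Pu z)
       = (\<Sum>z<W. hr * (Pc z * Pu z) - 2 * hr * (complex_of_real (vA W z) * Pu z) * Y)"
    proof (rule sum.cong[OF refl])
      fix z assume z: "z \<in> {..<W}"
      have "(\<Sum>z'<W. Hh (vA W) z z' * (hr * Pc z')) = (\<Sum>z'<W. (if z = z' then hr * Pc z' else 0) - 2 * complex_of_real (vA W z) * hr * (complex_of_real (vA W z') * Pc z'))"
        unfolding Hh_def by (intro sum.cong refl) (auto simp: algebra_simps)
      also have "\<dots> = hr * Pc z - 2 * complex_of_real (vA W z) * hr * Y"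
        using z unfolding Y_def by (simp add: sum_subtractf sum.delta sum_distrib_left)
      finally have eq: "(\<Sum>z'<W. Hh (vA W) z z' * (hr * Pc z')) = hr * Pc z - 2 * complex_of_real (vA W z) * hr * Y" .
      show "(\<Sum>z'<W. Hh (vA W) z z' * (hr * Pc z')) * Pu z = hr * (Pc z * Pu z) - 2 * hr * (complex_of_real (vA W z) * Pu z) * Y"
        unfolding eq by (simp add: algebra_simps)
    qed
    also have "\<dots> = hr * ((\<Sum>z<W. Pc z * Pu z) - 2 * (\<Sum>z<W. complex_of_real (vA W z) * Pu z) * Y)"
      by (simp add: sum_subtractf sum_distrib_left sum_distrib_right algebra_simps)
    finally show ?thesis .
  qed
  have b: "(\<Sum>z<W. Pc z * Pu z) = of_nat W" using PP by simp
  have c: "(\<Sum>z<W. complex_of_real (vA W z) * Pu z) = cnj Y"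
    unfolding Y_def using Pcnj by simp
  have d: "Y = complex_of_real r * Sg x m q"
  proof -
    have "Y = (\<Sum>z<W. complex_of_real r * ((-1) ^ z * (lam x q ^ z * cnj (lam x q) ^ (m - z))))"
      unfolding Y_def Pc_def vA_def r_def
      by (intro sum.cong refl) (use W Phi_c in auto)
    then show ?thesis unfolding Sg_def W by (simp only: sum_distrib_left)
  qed
  have e: "cnj Y * Y = complex_of_real (r\<^sup>2 * (norm (Sg x m q))\<^sup>2)"
  proof -
    have "cnj Y * Y = complex_of_real r * complex_of_real r * (Sg x m q * cnj (Sg x m q))"
      unfolding d by (simp add: mult_ac)
    also have "Sg x m q * cnj (Sg x m q) = complex_of_real ((norm (Sg x m q))\<^sup>2)"
      by (metis complex_norm_square)
    finally show ?thesis by (simp add: power2_eq_square)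
  qed
  have "complex_of_real (rr W) * (\<Sum>z<W. (\<Sum>z'<W. Hh (vA W) z z' * (hr * Pc z')) * Pu z)
     = complex_of_real (r * (hN N * r) * (real W - 2 * (r\<^sup>2 * (norm (Sg x m q))\<^sup>2)))"
    unfolding a b c by (simp add: mult.assoc e r_def hr_def)
  also have "r * (hN N * r) * (real W - 2 * (r\<^sup>2 * (norm (Sg x m q))\<^sup>2)) = hN N * (1 - 2 * r ^ 4 * (norm (Sg x m q))\<^sup>2)"
    using rW by (simp add: algebra_simps power2_eq_square power4_eq_xxxx)
  finally show ?thesis unfolding Pc_def Pu_def hr_def r_def .
qed


lemma Pst_0_cong: "(\<And>z. L 0 z = L' 0 z) \<Longrightarrow> Pst x g L 0 = Pst x g L' 0"
  unfolding Pst_def Phi_def by simp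

definition Alg :: "nat \<Rightarrow> nat \<Rightarrow> qmatrix list" where
  "Alg N m = U0 N (Suc m) # map Fl [1..<m] @ Umid N (Suc m) m # map Fl [1..<m] @ [Ufin N (Suc m) m]"

lemma length_Alg: "m \<ge> 1 \<Longrightarrow> length (Alg N m) - 1 = 2 * m"
  unfolding Alg_def by simp

lemma main_amp:
  assumes m: "m \<ge> 1" and x: "x \<subseteq> {..<N}"
  shows "run N (Suc m) x (Alg N m) init_state (x,False,0) =
    (\<Sum>q\<in>Pow {..<N}. complex_of_real (hq N x q * (hN N * (1 - 2 * (rr (Suc m)) ^ 4 * (norm (Sg x m q))\<^sup>2))))"
proof -
  define W where "W = Suc m"
  have W2: "W \<ge> 2" using m unfolding W_def by simp
  define Lc where "Lc = (\<lambda>t z::nat. t < z)"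
  define Lu where "Lu = (\<lambda>t z::nat. z \<le> t)"
  define hr where "hr = complex_of_real (hN N * rr W)"
  define Gm where "Gm = (\<lambda>q z. \<Sum>z'<W. Hh (vA W) z z' * (hr * Phi x Lc m q z'))"
  define \<psi>1 where "\<psi>1 = step N W x (U0 N W) init_state"
  have a1: "agree N W \<psi>1 (Pst x (\<lambda>q z. hr) Lc 0)"
  proof -
    have "agree N W \<psi>1 (Pst x (\<lambda>q z. hr) (\<lambda>t z. 0 < z) 0)"
      unfolding \<psi>1_def hr_def by (rule step_E) (rule U0_apply[OF W2])
    moreover have "Pst x (\<lambda>q z. hr) (\<lambda>t z. 0 < z) 0 = Pst x (\<lambda>q z. hr) Lc 0"
      by (rule Pst_0_cong) (simp add: Lc_def)
    ultimately show ?thesis by simp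
  qed
  define \<psi>2 where "\<psi>2 = fold (step N W x) (map Fl [1..<m]) \<psi>1"
  have a2: "agree N W \<psi>2 (Pst x (\<lambda>q z. hr) Lc (m - 1))"
  proof -
    have "agree N W (fold (step N W x) (map Fl [Suc 0..<Suc 0 + (m - 1)]) \<psi>1) (Pst x (\<lambda>q z. hr) Lc (0 + (m - 1)))"
      by (rule loop[OF _ a1]) (auto simp: Lc_def)
    then show ?thesis unfolding \<psi>2_def using m by simp
  qed
  define \<psi>3 where "\<psi>3 = step N W x (Umid N W m) \<psi>2"
  have a3: "agree N W \<psi>3 (Pst x Gm Lu 0)"
  proof -
    have "agree N W \<psi>3 (Pst x Gm (\<lambda>t z. z \<le> 0) 0)"
      unfolding \<psi>3_def Gm_def
      by (rule step_E) (use Umid_apply[OF m a2[unfolded Lc_def]] in \<open>simp add: Lc_def\<close>)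
    moreover have "Pst x Gm (\<lambda>t z. z \<le> 0) 0 = Pst x Gm Lu 0"
      by (rule Pst_0_cong) (simp add: Lu_def)
    ultimately show ?thesis by simp
  qed
  define \<psi>4 where "\<psi>4 = fold (step N W x) (map Fl [1..<m]) \<psi>3"
  have a4: "agree N W \<psi>4 (Pst x Gm Lu (m - 1))"
  proof -
    have "agree N W (fold (step N W x) (map Fl [Suc 0..<Suc 0 + (m - 1)]) \<psi>3) (Pst x Gm Lu (0 + (m - 1)))"
      by (rule loop[OF _ a3]) (auto simp: Lu_def)
    then show ?thesis unfolding \<psi>4_def using m by simp
  qed
  have run_eq: "run N W x (Alg N m) init_state = apply_mat N W (Ufin N W m) \<psi>4"
  proof -
    have "Alg N m = (U0 N W # map Fl [1..<m] @ Umid N W m # map Fl [1..<m]) @ [Ufin N W m]"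
      unfolding Alg_def W_def by simp
    then show ?thesis unfolding \<psi>4_def \<psi>3_def \<psi>2_def \<psi>1_def
      by (simp only: run_snoc) simp
  qed
  have "run N W x (Alg N m) init_state (x,False,0) =
    (\<Sum>q\<in>Pow {..<N}. complex_of_real (hq N x q) * (complex_of_real (rr W) * (\<Sum>z<W. Gm q z * Phi x Lu m q z)))"
    unfolding run_eq by (rule Ufin_apply[OF m a4[unfolded Lu_def] W2 x, folded Lu_def])
  also have "\<dots> = (\<Sum>q\<in>Pow {..<N}. complex_of_real (hq N x q) * complex_of_real (hN N * (1 - 2 * (rr W) ^ 4 * (norm (Sg x m q))\<^sup>2)))"
    unfolding Gm_def hr_def Lc_def Lu_def
    by (intro sum.cong refl arg_cong2[where f = "(*)"]) (rule inner_sum[OF W_def m])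
  finally show ?thesis unfolding W_def by simp
qed


lemma hq_hN: "hq N x q * hN N = (-1) ^ card (x \<inter> q) / 2 ^ N"
  unfolding hq_def hN_def by (simp add: power_divide)

lemma perq:
  assumes W: "W = Suc m" and m: "m \<ge> 1" and fx: "finite x" and ck: "card x = k" and k: "k \<ge> 1"
    and big: "(real W)\<^sup>2 \<ge> 16 * sqrt k"
  shows "hq N x q * (hN N * (1 - 2 * (rr W) ^ 4 * (norm (Sg x m q))\<^sup>2)) \<ge> (7/8) / 2 ^ N"
proof -
  have W2: "W \<ge> 2" using W m by simp
  have r4: "(rr W) ^ 4 = 1 / (real W)\<^sup>2"
  proof -
    have "real W * (rr W)\<^sup>2 = 1" by (rule rr_facts(3)[OF W2])
    then have "(rr W)\<^sup>2 = 1 / real W" using W2 by (simp add: field_simps)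
    moreover have "(rr W) ^ 4 = (rr W)\<^sup>2 * (rr W)\<^sup>2" by (simp add: power4_eq_xxxx power2_eq_square)
    ultimately have "(rr W) ^ 4 = (1 / real W)\<^sup>2" by (simp add: power2_eq_square)
    then show ?thesis by (simp add: power_divide)
  qed
  have Wpos: "(real W)\<^sup>2 > 0" using W2 by simp
  define w where "w = card (x \<inter> q)"
  have wk: "w \<le> k" unfolding w_def ck[symmetric] using fx by (simp add: card_mono)
  have "hq N x q * (hN N * (1 - 2 * (rr W) ^ 4 * (norm (Sg x m q))\<^sup>2)) = ((-1) ^ w * (1 - 2 * (norm (Sg x m q))\<^sup>2 / (real W)\<^sup>2)) / 2 ^ N"
  proof -
    have "hq N x q * (hN N * (1 - 2 * (rr W) ^ 4 * (norm (Sg x m q))\<^sup>2)) = (hq N x q * hN N) * (1 - 2 * (rr W) ^ 4 * (norm (Sg x m q))\<^sup>2)"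
      by (simp only: mult.assoc)
    also have "\<dots> = ((-1) ^ w / 2 ^ N) * (1 - 2 * (norm (Sg x m q))\<^sup>2 / (real W)\<^sup>2)"
      unfolding hq_hN r4 w_def by simp
    finally show ?thesis by simp
  qed
  also have "\<dots> \<ge> (7/8) / 2 ^ N"
  proof (rule divide_right_mono)
    show "(0::real) \<le> 2 ^ N" by simp
    show "7/8 \<le> (-1) ^ w * (1 - 2 * (norm (Sg x m q))\<^sup>2 / (real W)\<^sup>2)"
    proof (cases "odd w")
      case True
      have e: "Sg x m q = of_nat (Suc m) * \<i> ^ m" by (rule Sg_odd) (use True in \<open>simp add: w_def\<close>)
      have "norm (Sg x m q) = real W" unfolding e W by (simp only: norm_mult norm_power norm_of_nat norm_ii power_one mult_1_right)
      then show ?thesis using True Wpos by simp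
    next
      case False
      have b: "(norm (Sg x m q))\<^sup>2 \<le> 1 / prob0 x q" and p: "0 < prob0 x q"
        using Sg_even(1)[of x q m] Sg_even(2)[of x q] False unfolding w_def by auto
      have ip: "1 / prob0 x q \<le> sqrt k"
      proof (cases "w = 0")
        case True then have "prob0 x q = 1" unfolding prob0_def w_def Let_def by simp
        then show ?thesis using k by simp
      next
        case w0: False
        then have "prob0 x q = sqrt (1 / real w)" using False unfolding prob0_def w_def Let_def by simp
        then have "1 / prob0 x q = sqrt (real w)" by (simp add: real_sqrt_divide)
        then show ?thesis using wk by simp
      qed
      have "(norm (Sg x m q))\<^sup>2 / (real W)\<^sup>2 \<le> sqrt k / (16 * sqrt k)"
      proof -
        have "(norm (Sg x m q))\<^sup>2 / (real W)\<^sup>2 \<le> sqrt k / (real W)\<^sup>2"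
          using b ip Wpos by (intro divide_right_mono) auto
        also have "\<dots> \<le> sqrt k / (16 * sqrt k)"
          using big k Wpos by (intro divide_left_mono) auto
        finally show ?thesis .
      qed
      also have "\<dots> = 1 / 16" using k by simp
      finally show ?thesis using False by (simp add: mult.commute)
    qed
  qed
  finally show ?thesis .
qed


lemma unitary_Alg:
  assumes m: "m \<ge> 1"
  shows "\<forall>U\<in>set (Alg N m). is_unitary N (Suc m) U"
proof -
  have W2: "Suc m \<ge> 2" using m by simp
  have u0: "is_unitary N (Suc m) (U0 N (Suc m))"
    unfolding U0_def
    by (intro unitary_mmul unitary_Ctl unitary2_Prep unitary_Rz_Hh sum_v1[OF W2] unitary_Hq)
  have um: "is_unitary N (Suc m) (Umid N (Suc m) m)"
    unfolding Umid_def
    by (intro unitary_mmul unitary_Ctl unitary2_Prep unitary2_Unprep unitary_Rz_Hh sum_vA[OF W2])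
  have uf: "is_unitary N (Suc m) (Ufin N (Suc m) m)"
    unfolding Ufin_def
    by (intro unitary_mmul unitary_Ctl unitary2_Unprep unitary_Rz_Hh sum_v1[OF W2] unitary_Hq)
  have fl: "is_unitary N (Suc m) (Fl t)" for t
    unfolding Fl_def by (intro unitary_Ctl unitary2_flip)
  show ?thesis unfolding Alg_def using u0 um uf fl by auto
qed

lemma success:
  assumes m: "m \<ge> 1" and x: "x \<subseteq> {..<N}" and ck: "card x = k" and k: "k \<ge> 1"
    and big: "(real (Suc m))\<^sup>2 \<ge> 16 * sqrt k"
  shows "success_prob N (Suc m) (Alg N m) fst x \<ge> 2/3"
proof -
  have fx: "finite x" using x finite_subset by blast
  define A where "A = run N (Suc m) x (Alg N m) init_state (x,False,0)"
  define F where "F = (\<lambda>q. hq N x q * (hN N * (1 - 2 * (rr (Suc m)) ^ 4 * (norm (Sg x m q))\<^sup>2)))"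
  have A: "A = complex_of_real (\<Sum>q\<in>Pow {..<N}. F q)"
    unfolding A_def F_def main_amp[OF m x] by (simp add: of_real_sum)
  have "(\<Sum>q\<in>Pow {..<N}. (7/8) / 2 ^ N) \<le> (\<Sum>q\<in>Pow {..<N}. F q)"
    unfolding F_def by (intro sum_mono perq[OF refl m fx ck k big])
  moreover have "(\<Sum>q\<in>Pow {..<N}. (7/8::real) / 2 ^ N) = 7/8" by (simp add: card_Pow)
  ultimately have sF: "7/8 \<le> (\<Sum>q\<in>Pow {..<N}. F q)" by simp
  have nA: "7/8 \<le> norm A" unfolding A norm_of_real using sF by linarith
  have "(7/8::real)\<^sup>2 \<le> (norm A)\<^sup>2" using nA by (intro power_mono) auto
  then have p: "2/3 \<le> (norm A)\<^sup>2" by (simp add: power2_eq_square)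
  have mem: "(x,False,0) \<in> Basis N (Suc m)" using x by (simp add: mem_Basis)
  have "(norm A)\<^sup>2 = (if fst (x,False,0::nat) = x then (cmod (run N (Suc m) x (Alg N m) init_state (x,False,0)))\<^sup>2 else 0)"
    unfolding A_def by simp
  also have "\<dots> \<le> success_prob N (Suc m) (Alg N m) fst x"
    unfolding success_prob_def
    by (rule member_le_sum[OF mem]) auto
  finally show ?thesis using p by simp
qed

theorem theorem3:
  "\<exists>C::real. \<forall>N k::nat. 1 \<le> k \<and> 2 * k < N \<longrightarrow>
     (\<exists>W Us out. W > 0 \<and> Us \<noteq> [] \<and> (\<forall>U\<in>set Us. is_unitary N W U) \<and>
        real (length Us - 1) \<le> C * real k powr (1/4) \<and>
        (\<forall>x. x \<subseteq> {..<N} \<and> card x = k \<longrightarrow> success_prob N W Us out x \<ge> 2/3))"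
proof (rule exI[where x = 16], intro allI impI)
  fix N k :: nat
  assume nk: "1 \<le> k \<and> 2 * k < N"
  then have k: "k \<ge> 1" by simp
  define y where "y = real k powr (1/4)"
  have y1: "y \<ge> 1" unfolding y_def using k by (intro ge_one_powr_ge_zero) auto
  define m where "m = 4 * nat \<lceil>y\<rceil>"
  have cy: "real (nat \<lceil>y\<rceil>) = of_int \<lceil>y\<rceil>" using y1 by simp
  have m_ge: "real m \<ge> 4 * y" unfolding m_def using cy le_of_int_ceiling[of y] by simp
  have cl: "real_of_int \<lceil>y\<rceil> \<le> y + 1" by (rule of_int_ceiling_le_add_one)
  have m_le: "real m \<le> 4 * y + 4" unfolding m_def of_nat_mult of_nat_numeral using cy cl by linarith
  have m1: "m \<ge> 1" using m_ge y1 by simp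
  have yy: "y\<^sup>2 = sqrt (real k)"
  proof -
    have "y\<^sup>2 = real k powr (1/4 * 2)" unfolding y_def by (simp add: powr_powr[symmetric] powr_realpow[symmetric] power2_eq_square powr_add[symmetric])
    also have "\<dots> = sqrt (real k)" using k by (simp add: powr_half_sqrt)
    finally show ?thesis .
  qed
  have big: "(real (Suc m))\<^sup>2 \<ge> 16 * sqrt k"
  proof -
    have "16 * sqrt k = (4 * y)\<^sup>2" using yy by (simp add: power_mult_distrib)
    also have "\<dots> \<le> (real (Suc m))\<^sup>2" using m_ge y1 by (intro power_mono) auto
    finally show ?thesis .
  qed
  show "\<exists>W Us out. W > 0 \<and> Us \<noteq> [] \<and> (\<forall>U\<in>set Us. is_unitary N W U) \<and>
        real (length Us - 1) \<le> 16 * real k powr (1/4) \<and>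
        (\<forall>x. x \<subseteq> {..<N} \<and> card x = k \<longrightarrow> success_prob N W Us out x \<ge> 2/3)"
  proof (rule exI[where x = "Suc m"], rule exI[where x = "Alg N m"], rule exI[where x = fst], intro conjI allI impI)
    show "Suc m > 0" by simp
    show "Alg N m \<noteq> []" unfolding Alg_def by simp
    show "\<forall>U\<in>set (Alg N m). is_unitary N (Suc m) U" by (rule unitary_Alg[OF m1])
    show "real (length (Alg N m) - 1) \<le> 16 * real k powr (1/4)"
      unfolding length_Alg[OF m1] y_def[symmetric] using m_le y1 by simp
    fix x assume "x \<subseteq> {..<N} \<and> card x = k"
    then show "success_prob N (Suc m) (Alg N m) fst x \<ge> 2/3"
      using success[OF m1 _ _ k big] by auto
  qed
qed

end
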